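(* (i) For every $n\ge3$, any ortholattice in which the $n$OA law holds is orthomodular. (ii) For every $n\ge3$, there exists an orthomodular lattice in which the $n$OA law fails.
   Context: An ortholattice (OL) is a bounded lattice $(L,\cap,\cup,0,1)$ with a unary operation $'$ satisfying $a''=a$, $a\le b\Rightarrow b'\le a'$, $a\cap a'=0$ and $a\cup a'=1$. An orthomodular lattice (OML) is an OL satisfying: $a\le b$ implies $b=a\cup(a'\cap b)$. Write $a\to b=a'\cup(a\cap b)$. The operation $\overset{(n)}{\equiv}$ on variables $a_1,\dots,a_n$ is defined by $$a_1\overset{(3)}{\equiv}a_2=((a_1\to a_3)\cap(a_2\to a_3))\cup((a_1'\to a_3)\cap(a_2'\to a_3)),$$ $$a_1\overset{(n)}{\equiv}a_2=(a_1\overset{(n-1)}{\equiv}a_2)\cup((a_1\overset{(n-1)}{\equiv}a_n)\cap(a_2\overset{(n-1)}{\equiv}a_n))\quad (n\ge4).$$ In each $(n-1)$-level subexpression only the two displayed variables are substituted; $a_3$ stays the fixed third variable. The $n$OA law is the equation $(a_1\to a_3)\cap(a_1\overset{(n)}{\equiv}a_2)\le a_2\to a_3$, required for all $a_1,\dots,a_n$. *)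

theory Defs
  imports Main
begin

record 'a ol_struct =
  ol_carrier :: "'a set"
  ol_meet :: "'a \<Rightarrow> 'a \<Rightarrow> 'a"
  ol_join :: "'a \<Rightarrow> 'a \<Rightarrow> 'a"
  ol_compl :: "'a \<Rightarrow> 'a"
  ol_zero :: 'a
  ol_one :: 'a

definition ol_le :: "'a ol_struct \<Rightarrow> 'a \<Rightarrow> 'a \<Rightarrow> bool" where
  "ol_le L a b \<longleftrightarrow> ol_meet L a b = a"

definition ortholattice :: "'a ol_struct \<Rightarrow> bool" where
  "ortholattice L \<longleftrightarrow>
     (let A = ol_carrier L; m = ol_meet L; j = ol_join L; c = ol_compl L in
      (\<forall>a\<in>A. \<forall>b\<in>A. m a b \<in> A \<and> j a b \<in> A) \<and>
      (\<forall>a\<in>A. c a \<in> A) \<and> ol_zero L \<in> A \<and> ol_one L \<in> A \<and>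
      (\<forall>a\<in>A. \<forall>b\<in>A. m a b = m b a \<and> j a b = j b a) \<and>
      (\<forall>a\<in>A. \<forall>b\<in>A. \<forall>d\<in>A. m (m a b) d = m a (m b d) \<and> j (j a b) d = j a (j b d)) \<and>
      (\<forall>a\<in>A. \<forall>b\<in>A. m a (j a b) = a \<and> j a (m a b) = a) \<and>
      (\<forall>a\<in>A. m a (ol_zero L) = ol_zero L \<and> j a (ol_one L) = ol_one L) \<and>
      (\<forall>a\<in>A. c (c a) = a) \<and>
      (\<forall>a\<in>A. \<forall>b\<in>A. ol_le L a b \<longrightarrow> ol_le L (c b) (c a)) \<and>
      (\<forall>a\<in>A. m a (c a) = ol_zero L \<and> j a (c a) = ol_one L))"

definition orthomodular :: "'a ol_struct \<Rightarrow> bool" where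
  "orthomodular L \<longleftrightarrow> ortholattice L \<and>
     (\<forall>a\<in>ol_carrier L. \<forall>b\<in>ol_carrier L. ol_le L a b \<longrightarrow>
        b = ol_join L a (ol_meet L (ol_compl L a) b))"

definition ol_imp :: "'a ol_struct \<Rightarrow> 'a \<Rightarrow> 'a \<Rightarrow> 'a" where
  "ol_imp L a b = ol_join L (ol_compl L a) (ol_meet L a b)"

text \<open>\<open>oa_eqv L k v x y\<close> is \<open>x \<equiv>(k) y\<close>, where \<open>v i\<close> is the variable \<open>a_i\<close> (\<open>i \<ge> 3\<close>).
  For \<open>k \<le> 3\<close> it is the base expression \<open>\<equiv>(3)\<close>; for \<open>k \<ge> 4\<close> the recursion of the paper.\<close>

primrec oa_eqv :: "'a ol_struct \<Rightarrow> nat \<Rightarrow> (nat \<Rightarrow> 'a) \<Rightarrow> 'a \<Rightarrow> 'a \<Rightarrow> 'a" where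
  "oa_eqv L 0 v x y =
     ol_join L (ol_meet L (ol_imp L x (v 3)) (ol_imp L y (v 3)))
               (ol_meet L (ol_imp L (ol_compl L x) (v 3)) (ol_imp L (ol_compl L y) (v 3)))"
| "oa_eqv L (Suc k) v x y =
     (if Suc k \<le> 3 then oa_eqv L k v x y
      else ol_join L (oa_eqv L k v x y)
             (ol_meet L (oa_eqv L k v x (v (Suc k))) (oa_eqv L k v y (v (Suc k)))))"

definition nOA_law :: "'a ol_struct \<Rightarrow> nat \<Rightarrow> bool" where
  "nOA_law L n \<longleftrightarrow>
     (\<forall>v. (\<forall>i\<in>{1..n}. v i \<in> ol_carrier L) \<longrightarrow>
        ol_le L (ol_meet L (ol_imp L (v 1) (v 3)) (oa_eqv L n v (v 1) (v 2)))
                (ol_imp L (v 2) (v 3)))"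

end

theory Submission
  imports Defs
begin


locale OLx =
  fixes L :: "'a ol_struct"
  assumes ol: "ortholattice L"
begin

abbreviation "A \<equiv> ol_carrier L"
abbreviation "mt \<equiv> ol_meet L"
abbreviation "jn \<equiv> ol_join L"
abbreviation "cp \<equiv> ol_compl L"
abbreviation "zz \<equiv> ol_zero L"
abbreviation "uu \<equiv> ol_one L"

lemma mC: "a \<in> A \<Longrightarrow> b \<in> A \<Longrightarrow> mt a b \<in> A" using ol unfolding ortholattice_def Let_def by blast
lemma jC: "a \<in> A \<Longrightarrow> b \<in> A \<Longrightarrow> jn a b \<in> A" using ol unfolding ortholattice_def Let_def by blast
lemma cC: "a \<in> A \<Longrightarrow> cp a \<in> A" using ol unfolding ortholattice_def Let_def by blast
lemma zC: "zz \<in> A" using ol unfolding ortholattice_def Let_def by blast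
lemma uC: "uu \<in> A" using ol unfolding ortholattice_def Let_def by blast
lemma mcomm: "a \<in> A \<Longrightarrow> b \<in> A \<Longrightarrow> mt a b = mt b a" using ol unfolding ortholattice_def Let_def by blast
lemma jcomm: "a \<in> A \<Longrightarrow> b \<in> A \<Longrightarrow> jn a b = jn b a" using ol unfolding ortholattice_def Let_def by blast
lemma massoc: "a \<in> A \<Longrightarrow> b \<in> A \<Longrightarrow> d \<in> A \<Longrightarrow> mt (mt a b) d = mt a (mt b d)" using ol unfolding ortholattice_def Let_def by blast
lemma jassoc: "a \<in> A \<Longrightarrow> b \<in> A \<Longrightarrow> d \<in> A \<Longrightarrow> jn (jn a b) d = jn a (jn b d)" using ol unfolding ortholattice_def Let_def by blast
lemma abs1: "a \<in> A \<Longrightarrow> b \<in> A \<Longrightarrow> mt a (jn a b) = a" using ol unfolding ortholattice_def Let_def by blast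
lemma abs2: "a \<in> A \<Longrightarrow> b \<in> A \<Longrightarrow> jn a (mt a b) = a" using ol unfolding ortholattice_def Let_def by blast
lemma m0: "a \<in> A \<Longrightarrow> mt a zz = zz" using ol unfolding ortholattice_def Let_def by blast
lemma j1: "a \<in> A \<Longrightarrow> jn a uu = uu" using ol unfolding ortholattice_def Let_def by blast
lemma cc: "a \<in> A \<Longrightarrow> cp (cp a) = a" using ol unfolding ortholattice_def Let_def by blast
lemma mcp: "a \<in> A \<Longrightarrow> mt a (cp a) = zz" using ol unfolding ortholattice_def Let_def by blast
lemma jcp: "a \<in> A \<Longrightarrow> jn a (cp a) = uu" using ol unfolding ortholattice_def Let_def by blast

lemma midem: "a \<in> A \<Longrightarrow> mt a a = a"
  by (metis abs1 abs2 mC)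
lemma m1: "a \<in> A \<Longrightarrow> mt a uu = a"
  by (metis abs1 j1 uC)
lemma j0: "a \<in> A \<Longrightarrow> jn a zz = a"
  by (metis abs2 m0 zC)
lemma m1': "a \<in> A \<Longrightarrow> mt uu a = a" by (metis m1 mcomm uC)
lemma j0': "a \<in> A \<Longrightarrow> jn zz a = a" by (metis j0 jcomm zC)
lemma m0': "a \<in> A \<Longrightarrow> mt zz a = zz" by (metis m0 mcomm zC)
lemma j1': "a \<in> A \<Longrightarrow> jn uu a = uu" by (metis j1 jcomm uC)
lemma c0: "cp zz = uu" by (metis j0' jcp cC zC)
lemma c1: "cp uu = zz" by (metis c0 cc zC)

lemma le_iff_join: "a \<in> A \<Longrightarrow> b \<in> A \<Longrightarrow> ol_le L a b \<longleftrightarrow> jn a b = b"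
  unfolding ol_le_def by (metis abs1 abs2 jcomm mcomm)

lemma le_trans: "a \<in> A \<Longrightarrow> b \<in> A \<Longrightarrow> d \<in> A \<Longrightarrow> ol_le L a b \<Longrightarrow> ol_le L b d \<Longrightarrow> ol_le L a d"
  unfolding ol_le_def by (metis massoc)

lemma le_antisym: "a \<in> A \<Longrightarrow> b \<in> A \<Longrightarrow> ol_le L a b \<Longrightarrow> ol_le L b a \<Longrightarrow> a = b"
  unfolding ol_le_def by (metis mcomm)

lemma le_refl: "a \<in> A \<Longrightarrow> ol_le L a a"
  unfolding ol_le_def by (metis midem)

lemma le_join1: "a \<in> A \<Longrightarrow> b \<in> A \<Longrightarrow> ol_le L a (jn a b)"
  unfolding ol_le_def by (metis abs1)

lemma le_meet2: "a \<in> A \<Longrightarrow> b \<in> A \<Longrightarrow> ol_le L (mt a b) b"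
  unfolding ol_le_def by (metis massoc midem)

lemma join_le: "a \<in> A \<Longrightarrow> b \<in> A \<Longrightarrow> d \<in> A \<Longrightarrow> ol_le L a d \<Longrightarrow> ol_le L b d \<Longrightarrow> ol_le L (jn a b) d"
  by (metis jC jassoc le_iff_join)

lemma meet_mono: assumes "a \<in> A" "b \<in> A" "d \<in> A" "ol_le L a b" shows "ol_le L (mt d a) (mt d b)"
proof -
  have ab: "mt a b = a" using assms(4) unfolding ol_le_def .
  have "mt (mt d a) (mt d b) = mt d (mt a (mt d b))" using assms by (simp add: massoc mC)
  also have "\<dots> = mt d (mt (mt a d) b)" using assms by (simp add: massoc mC)
  also have "\<dots> = mt d (mt (mt d a) b)" using assms by (simp add: mcomm)
  also have "\<dots> = mt d (mt d (mt a b))" using assms by (simp add: massoc mC)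
  also have "\<dots> = mt (mt d d) (mt a b)" using assms by (simp add: massoc mC)
  also have "\<dots> = mt d a" using assms ab by (simp add: midem)
  finally show ?thesis unfolding ol_le_def .
qed

lemma impC: "a \<in> A \<Longrightarrow> b \<in> A \<Longrightarrow> ol_imp L a b \<in> A"
  unfolding ol_imp_def by (simp add: jC mC cC)

lemma oa_mono:
  assumes v: "\<forall>i. v i \<in> A"
  shows "x \<in> A \<Longrightarrow> y \<in> A \<Longrightarrow> oa_eqv L k v x y \<in> A \<and> ol_le L (oa_eqv L 0 v x y) (oa_eqv L k v x y)"
proof (induction k arbitrary: x y)
  case 0
  have "oa_eqv L 0 v x y \<in> A" using 0 v by (simp add: jC mC cC impC)
  then show ?case by (simp add: le_refl)
next
  case (Suc k)
  show ?case
  proof (cases "Suc k \<le> 3")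
    case True
    then show ?thesis using Suc by simp
  next
    case False
    have vk: "v (Suc k) \<in> A" using v by blast
    have h1: "oa_eqv L k v x y \<in> A" "ol_le L (oa_eqv L 0 v x y) (oa_eqv L k v x y)" using Suc by auto
    have h2: "oa_eqv L k v x (v (Suc k)) \<in> A" using Suc.IH[of x "v (Suc k)"] Suc.prems vk by blast
    have h3: "oa_eqv L k v y (v (Suc k)) \<in> A" using Suc.IH[of y "v (Suc k)"] Suc.prems vk by blast
    have e0: "oa_eqv L 0 v x y \<in> A" using Suc.prems v by (simp add: jC mC cC impC)
    have X: "mt (oa_eqv L k v x (v (Suc k))) (oa_eqv L k v y (v (Suc k))) \<in> A" using h2 h3 mC by blast
    have eq: "oa_eqv L (Suc k) v x y = jn (oa_eqv L k v x y) (mt (oa_eqv L k v x (v (Suc k))) (oa_eqv L k v y (v (Suc k))))"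
      using False by simp
    show ?thesis unfolding eq
      using h1 X e0 jC le_join1 le_trans by blast
  qed
qed

lemma law3:
  assumes law: "nOA_law L n" and v: "\<forall>i. v i \<in> A"
  shows "ol_le L (mt (ol_imp L (v 1) (v 3)) (oa_eqv L 0 v (v 1) (v 2))) (ol_imp L (v 2) (v 3))"
proof -
  have l: "ol_le L (mt (ol_imp L (v 1) (v 3)) (oa_eqv L n v (v 1) (v 2))) (ol_imp L (v 2) (v 3))"
    using law v unfolding nOA_law_def by blast
  have P: "ol_imp L (v 1) (v 3) \<in> A" "ol_imp L (v 2) (v 3) \<in> A" using v impC by auto
  have E: "oa_eqv L n v (v 1) (v 2) \<in> A" "ol_le L (oa_eqv L 0 v (v 1) (v 2)) (oa_eqv L n v (v 1) (v 2))"
    using oa_mono[OF v, of "v 1" "v 2" n] v by auto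
  have E0: "oa_eqv L 0 v (v 1) (v 2) \<in> A" using oa_mono[OF v, of "v 1" "v 2" 0] v by auto
  have "ol_le L (mt (ol_imp L (v 1) (v 3)) (oa_eqv L 0 v (v 1) (v 2))) (mt (ol_imp L (v 1) (v 3)) (oa_eqv L n v (v 1) (v 2)))"
    using meet_mono E E0 P by blast
  then show ?thesis using le_trans l P E E0 mC by blast
qed

lemma partI: assumes law: "nOA_law L n" shows "orthomodular L"
  unfolding orthomodular_def
proof (intro conjI ol ballI impI)
  fix a b assume a: "a \<in> A" and b: "b \<in> A" and ab: "ol_le L a b"
  define v where "v = (\<lambda>i::nat. if i = 2 then cp a else if i = 3 then b else zz)"
  have v: "\<forall>i. v i \<in> A" unfolding v_def using a b cC zC by auto
  have v1: "v 1 = zz" "v 2 = cp a" "v 3 = b" unfolding v_def by auto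
  define r where "r = jn a (mt (cp a) b)"
  have rA: "r \<in> A" unfolding r_def using a b by (simp add: jC mC cC)
  have rb: "ol_le L r b" unfolding r_def
    using join_le[OF a mC[OF cC[OF a] b] b] ab le_meet2[OF cC[OF a] b] by blast
  have abm: "mt a b = a" using ab unfolding ol_le_def .
  have i1: "ol_imp L zz b = uu" unfolding ol_imp_def using b by (simp add: c0 m0' j0 uC)
  have i2: "ol_imp L (cp a) b = r" unfolding ol_imp_def r_def using a by (simp add: cc)
  have i3: "ol_imp L (cp zz) b = b" unfolding ol_imp_def using b by (simp add: c0 c1 m1' j0')
  have i4: "ol_imp L (cp (cp a)) b = uu" unfolding ol_imp_def using a b abm by (simp add: cc jcomm cC jcp)
  have E: "oa_eqv L 0 v (v 1) (v 2) = b"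
    unfolding oa_eqv.simps v1 i1 i2 i3 i4 using rA b rb le_iff_join by (simp add: m1' m1)
  from law3[OF law v] have "ol_le L (mt (ol_imp L (v 1) (v 3)) b) (ol_imp L (v 2) (v 3))"
    by (simp only: E)
  then have "ol_le L b r"
    unfolding v1 i1 i2 using b by (simp add: m1')
  then show "b = jn a (mt (cp a) b)" using le_antisym rA b rb r_def by blast
qed

end


definition ORTH :: "nat list list" where "ORTH = [[3, 7, 9, 10], [5, 8, 10, 12], [9, 11], [0, 7], [5, 6, 7, 11], [1, 4, 7, 12], [4, 11], [0, 3, 4, 5], [1, 10], [0, 2, 10, 11], [0, 1, 8, 9], [2, 4, 6, 9], [1, 5]]"
definition AS :: "nat list list" where "AS = [[], [0, 1, 2, 3, 4, 5, 6, 7, 8, 9, 10, 11, 12], [0], [1], [2], [3], [4], [5], [6], [7], [8], [9], [10], [11], [12], [3, 7, 9, 10], [5, 8, 10, 12], [9, 11], [0, 7], [5, 6, 7, 11], [1, 4, 7, 12], [4, 11], [0, 3, 4, 5], [1, 10], [0, 2, 10, 11], [0, 1, 8, 9], [2, 4, 6, 9], [1, 5]]"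
definition inter :: "nat list \<Rightarrow> nat list \<Rightarrow> nat list" where
  "inter S T = filter (\<lambda>x. List.member T x) S"
definition oc :: "nat list \<Rightarrow> nat list" where
  "oc S = filter (\<lambda>x. list_all (\<lambda>y. List.member (ORTH ! y) x) S) [0..<13]"
definition subl :: "nat list \<Rightarrow> nat list \<Rightarrow> bool" where
  "subl S T = list_all (\<lambda>x. List.member T x) S"

definition idx :: "nat list \<Rightarrow> nat" where "idx S = (LEAST k. k < 28 \<and> AS ! k = S)"
definition cm :: "nat \<Rightarrow> nat \<Rightarrow> nat" where "cm a b = idx (inter (AS ! a) (AS ! b))"
definition cc :: "nat \<Rightarrow> nat" where "cc a = idx (oc (AS ! a))"
definition cj :: "nat \<Rightarrow> nat \<Rightarrow> nat" where "cj a b = cc (cm (cc a) (cc b))"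
definition LL :: "nat ol_struct" where
  "LL = \<lparr>ol_carrier = {0..<28}, ol_meet = cm, ol_join = cj, ol_compl = cc, ol_zero = 0, ol_one = 1\<rparr>"

lemma chkF1: "list_all (\<lambda>S. list_all (\<lambda>T. List.member AS (inter S T)) AS) AS"
  unfolding AS_def inter_def by code_simp
lemma chkOML: "list_all (\<lambda>S. list_all (\<lambda>T. if subl S T then oc (inter (oc S) (oc (inter (oc S) T))) = T else True) AS) AS"
  unfolding AS_def inter_def oc_def subl_def ORTH_def by code_simp
lemma chkC: "list_all (\<lambda>S. List.member AS (oc S) \<and> oc (oc S) = S \<and> sorted S \<and> distinct S \<and> list_all (\<lambda>x. x < 13) S) AS"
  unfolding AS_def oc_def ORTH_def by code_simp
lemma chkD: "distinct AS" unfolding AS_def by code_simp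
lemma chkO: "list_all (\<lambda>x. list_all (\<lambda>y. y < 13 \<and> y \<noteq> x \<and> List.member (ORTH ! y) x) (ORTH ! x)) [0..<13]"
  unfolding ORTH_def by code_simp
lemma lenAS: "length AS = 28" unfolding AS_def by simp
lemma AS01: "AS ! 0 = []" "AS ! 1 = [0..<13]" unfolding AS_def by (simp_all add: upt_rec)

lemma idx: assumes "S \<in> set AS" shows "idx S < 28 \<and> AS ! idx S = S"
proof -
  from assms obtain k where "k < 28" "AS ! k = S" using lenAS by (auto simp: in_set_conv_nth)
  then have "\<exists>k. k < 28 \<and> AS ! k = S" by blast
  then show ?thesis unfolding idx_def by (rule LeastI_ex)
qed

lemma F1: assumes "a < 28" "b < 28" shows "inter (AS ! a) (AS ! b) \<in> set AS"
proof -
  have H: "\<forall>S\<in>set AS. \<forall>T\<in>set AS. inter S T \<in> set AS" using chkF1 by (simp add: list_all_iff)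
  have "AS ! a \<in> set AS" "AS ! b \<in> set AS" using assms lenAS by simp_all
  then show ?thesis using H by blast
qed
lemma C: "oc (AS ! a) \<in> set AS \<and> oc (oc (AS ! a)) = AS ! a \<and> sorted (AS ! a) \<and> distinct (AS ! a) \<and> (\<forall>x\<in>set (AS ! a). x < 13)" if "a < 28"
proof -
  have H: "\<forall>S\<in>set AS. oc S \<in> set AS \<and> oc (oc S) = S \<and> sorted S \<and> distinct S \<and> (\<forall>x\<in>set S. x < 13)"
    using chkC by (simp add: list_all_iff)
  have "AS ! a \<in> set AS" using that lenAS by simp
  then show ?thesis using H by blast
qed

lemma cm_lt[simp]: "a < 28 \<Longrightarrow> b < 28 \<Longrightarrow> cm a b < 28" unfolding cm_def using idx F1 by blast
lemma AS_cm[simp]: "a < 28 \<Longrightarrow> b < 28 \<Longrightarrow> AS ! (cm a b) = inter (AS ! a) (AS ! b)" unfolding cm_def using idx F1 by blast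
lemma cc_lt[simp]: "a < 28 \<Longrightarrow> cc a < 28" unfolding cc_def using idx C by blast
lemma AS_cc[simp]: "a < 28 \<Longrightarrow> AS ! (cc a) = oc (AS ! a)" unfolding cc_def using idx C by blast

lemma inj_list: "a < 28 \<Longrightarrow> b < 28 \<Longrightarrow> AS ! a = AS ! b \<Longrightarrow> a = b"
  using chkD lenAS by (simp add: nth_eq_iff_index_eq)
lemma inj_set: "a < 28 \<Longrightarrow> b < 28 \<Longrightarrow> set (AS ! a) = set (AS ! b) \<Longrightarrow> a = b"
proof -
  assume a: "a < 28" and b: "b < 28" and e: "set (AS ! a) = set (AS ! b)"
  have "AS ! a = AS ! b" using C[OF a] C[OF b] e by (intro sorted_distinct_set_unique) auto
  then show "a = b" using inj_list a b by blast
qed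

definition Oset :: "nat set \<Rightarrow> nat set" where
  "Oset X = {x. x < 13 \<and> (\<forall>y\<in>X. x \<in> set (ORTH ! y))}"

lemma set_inter[simp]: "set (inter S T) = set S \<inter> set T" unfolding inter_def by auto
lemma set_oc[simp]: "set (oc S) = Oset (set S)" unfolding oc_def Oset_def list_all_iff by auto

lemma ORTH: assumes "x < 13" "y \<in> set (ORTH ! x)" shows "y < 13 \<and> y \<noteq> x \<and> x \<in> set (ORTH ! y)"
proof -
  have H: "\<forall>x\<in>set [0..<13]. \<forall>y\<in>set (ORTH ! x). y < 13 \<and> y \<noteq> x \<and> List.member (ORTH ! y) x"
    using chkO by (simp only: list_all_iff)
  have "x \<in> set [0..<13]" using assms(1) by (simp only: set_upt atLeastLessThan_iff) simp
  then have "y < 13 \<and> y \<noteq> x \<and> List.member (ORTH ! y) x" using H assms(2) by blast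
  then show ?thesis unfolding List.member_iff .
qed

lemma Oset_anti: "X \<subseteq> Y \<Longrightarrow> Oset Y \<subseteq> Oset X" unfolding Oset_def by auto
lemma Oset_ext: assumes "X \<subseteq> {..<13}" shows "X \<subseteq> Oset (Oset X)"
proof
  fix x assume x: "x \<in> X"
  have "\<forall>y\<in>Oset X. x \<in> set (ORTH ! y)"
  proof
    fix y assume "y \<in> Oset X"
    then have "y \<in> set (ORTH ! x)" unfolding Oset_def using x by auto
    moreover have "x < 13" using x assms by auto
    ultimately show "x \<in> set (ORTH ! y)" using ORTH by blast
  qed
  then show "x \<in> Oset (Oset X)" using x assms unfolding Oset_def by auto
qed
lemma Oset_irr: "X \<inter> Oset X = {}"
proof (rule ccontr)
  assume "X \<inter> Oset X \<noteq> {}"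
  then obtain x where "x \<in> X" "x < 13" "\<forall>y\<in>X. x \<in> set (ORTH ! y)" unfolding Oset_def by auto
  then have "x < 13" "x \<in> set (ORTH ! x)" by auto
  then show False using ORTH by blast
qed
lemma Oset_empty: "Oset {} = {..<13}" unfolding Oset_def by auto

abbreviation "sg a \<equiv> set (AS ! a)"

lemma sg_cm: "a < 28 \<Longrightarrow> b < 28 \<Longrightarrow> sg (cm a b) = sg a \<inter> sg b" by simp
lemma sg_cc: "a < 28 \<Longrightarrow> sg (cc a) = Oset (sg a)" by simp
lemma sg_sub: "a < 28 \<Longrightarrow> sg a \<subseteq> {..<13}" using C by auto
lemma cc_cc: "a < 28 \<Longrightarrow> cc (cc a) = a" using C inj_list cc_lt AS_cc by metis
lemma sg0: "sg 0 = {}" by (simp add: AS01)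
lemma sg1: "sg 1 = {..<13}" unfolding AS01 by (simp add: lessThan_atLeast0)

lemma le_LL: "a < 28 \<Longrightarrow> b < 28 \<Longrightarrow> ol_le LL a b \<longleftrightarrow> sg a \<subseteq> sg b"
proof -
  assume a: "a < 28" and b: "b < 28"
  have "ol_le LL a b \<longleftrightarrow> cm a b = a" unfolding ol_le_def LL_def by simp
  also have "\<dots> \<longleftrightarrow> sg (cm a b) = sg a" using inj_set[of "cm a b" a] a b cm_lt by metis
  also have "\<dots> \<longleftrightarrow> sg a \<subseteq> sg b" using a b by auto
  finally show ?thesis .
qed


lemma cm_comm: "a < 28 \<Longrightarrow> b < 28 \<Longrightarrow> cm a b = cm b a"
  by (rule inj_set) (auto)
lemma cm_assoc: "a < 28 \<Longrightarrow> b < 28 \<Longrightarrow> d < 28 \<Longrightarrow> cm (cm a b) d = cm a (cm b d)"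
  by (rule inj_set) (auto)
lemma cj_lt[simp]: "a < 28 \<Longrightarrow> b < 28 \<Longrightarrow> cj a b < 28" unfolding cj_def by simp
lemma AS_cj[simp]: "a < 28 \<Longrightarrow> b < 28 \<Longrightarrow> AS ! (cj a b) = oc (inter (oc (AS ! a)) (oc (AS ! b)))"
  unfolding cj_def by simp
lemma cj_comm: "a < 28 \<Longrightarrow> b < 28 \<Longrightarrow> cj a b = cj b a"
  unfolding cj_def using cm_comm by simp
lemma cj_assoc: "a < 28 \<Longrightarrow> b < 28 \<Longrightarrow> d < 28 \<Longrightarrow> cj (cj a b) d = cj a (cj b d)"
  unfolding cj_def by (simp add: cc_cc cm_assoc)
lemma abs1: assumes "a < 28" "b < 28" shows "cm a (cj a b) = a"
proof (rule inj_set)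
  have "sg a \<subseteq> Oset (Oset (sg a))" using Oset_ext sg_sub assms by blast
  also have "\<dots> \<subseteq> Oset (Oset (sg a) \<inter> Oset (sg b))" by (rule Oset_anti) blast
  finally show "sg (cm a (cj a b)) = sg a" using assms by auto
qed (use assms in auto)
lemma abs2: assumes "a < 28" "b < 28" shows "cj a (cm a b) = a"
proof -
  have "cm (cc a) (cc (cm a b)) = cc a"
  proof (rule inj_set)
    have "Oset (sg a) \<subseteq> Oset (sg a \<inter> sg b)" by (rule Oset_anti) blast
    then show "sg (cm (cc a) (cc (cm a b))) = sg (cc a)" using assms by auto
  qed (use assms in auto)
  then show ?thesis unfolding cj_def using assms by (simp add: cc_cc)
qed
lemma m0: "a < 28 \<Longrightarrow> cm a 0 = 0"
  by (rule inj_set) (auto simp: sg0)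
lemma sg1': "sg (Suc 0) = {..<13}" using sg1 by simp
lemma cc1: "cc (Suc 0) = 0"
proof (rule inj_set)
  have "Oset {..<13} \<subseteq> {..<13}" unfolding Oset_def by auto
  then have e: "Oset {..<13} = {}" using Oset_irr[of "{..<13}"] by blast
  have "sg (cc (Suc 0)) = Oset (sg (Suc 0))" by (rule sg_cc) simp
  then show "sg (cc (Suc 0)) = sg 0" using e sg0 sg1' by simp
qed auto
lemma cc0: "cc 0 = Suc 0"
proof (rule inj_set)
  have "sg (cc 0) = Oset (sg 0)" by (rule sg_cc) simp
  then show "sg (cc 0) = sg (Suc 0)" using sg0 sg1' Oset_empty by simp
qed auto
lemma j1: "a < 28 \<Longrightarrow> cj a (Suc 0) = Suc 0"
  unfolding cj_def by (simp add: cc1 m0 cc0)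
lemma mcp: "a < 28 \<Longrightarrow> cm a (cc a) = 0"
  by (rule inj_set) (auto simp: sg0 Oset_irr)
lemma jcp: "a < 28 \<Longrightarrow> cj a (cc a) = Suc 0"
  unfolding cj_def by (simp add: cc_cc cm_comm[of "cc a" a] mcp cc0)
lemma anti: "a < 28 \<Longrightarrow> b < 28 \<Longrightarrow> ol_le LL a b \<Longrightarrow> ol_le LL (cc b) (cc a)"
  using le_LL Oset_anti by simp

lemma LL_simps[simp]: "ol_carrier LL = {0..<28}" "ol_meet LL = cm" "ol_join LL = cj" "ol_compl LL = cc"
  "ol_zero LL = 0" "ol_one LL = 1"
  unfolding LL_def by simp_all

lemma olLL: "ortholattice LL"
proof -
  have 1: "\<forall>a\<in>{0..<28::nat}. \<forall>b\<in>{0..<28}. cm a b \<in> {0..<28} \<and> cj a b \<in> {0..<28}" by simp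
  have 2: "(\<forall>a\<in>{0..<28::nat}. cc a \<in> {0..<28}) \<and> (0::nat) \<in> {0..<28} \<and> (1::nat) \<in> {0..<28}" by simp
  have 3: "\<forall>a\<in>{0..<28::nat}. \<forall>b\<in>{0..<28}. cm a b = cm b a \<and> cj a b = cj b a"
    using cm_comm cj_comm by simp
  have 4: "\<forall>a\<in>{0..<28::nat}. \<forall>b\<in>{0..<28}. \<forall>d\<in>{0..<28}. cm (cm a b) d = cm a (cm b d) \<and> cj (cj a b) d = cj a (cj b d)"
    using cm_assoc cj_assoc by simp
  have 5: "\<forall>a\<in>{0..<28::nat}. \<forall>b\<in>{0..<28}. cm a (cj a b) = a \<and> cj a (cm a b) = a"
    using abs1 abs2 by simp
  have 6: "\<forall>a\<in>{0..<28::nat}. cm a 0 = 0 \<and> cj a 1 = 1" using m0 j1 by simp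
  have 7: "\<forall>a\<in>{0..<28::nat}. cc (cc a) = a" using cc_cc by simp
  have 8: "\<forall>a\<in>{0..<28::nat}. \<forall>b\<in>{0..<28}. ol_le LL a b \<longrightarrow> ol_le LL (cc b) (cc a)" using anti by simp
  have 9: "\<forall>a\<in>{0..<28::nat}. cm a (cc a) = 0 \<and> cj a (cc a) = 1" using mcp jcp by simp
  show ?thesis unfolding ortholattice_def Let_def LL_simps using 1 2 3 4 5 6 7 8 9 by blast
qed

lemma omlLL: "orthomodular LL"
  unfolding orthomodular_def
proof (intro conjI olLL ballI impI)
  fix a b assume a: "a \<in> ol_carrier LL" and b: "b \<in> ol_carrier LL" and ab: "ol_le LL a b"
  have a': "a < 28" "b < 28" using a b by auto
  have H: "\<forall>S\<in>set AS. \<forall>T\<in>set AS. if subl S T then oc (inter (oc S) (oc (inter (oc S) T))) = T else True"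
    using chkOML by (simp only: list_all_iff)
  have m: "AS ! a \<in> set AS" "AS ! b \<in> set AS" using a' lenAS by simp_all
  have s: "subl (AS ! a) (AS ! b)" using ab le_LL a' unfolding subl_def list_all_iff by auto
  have "oc (inter (oc (AS ! a)) (oc (inter (oc (AS ! a)) (AS ! b)))) = AS ! b"
    using H m s by force
  then have "AS ! (cj a (cm (cc a) b)) = AS ! b" using a' by simp
  then show "b = ol_join LL a (ol_meet LL (ol_compl LL a) b)" using inj_list a' by simp
qed


lemma le_subl: "a < 28 \<Longrightarrow> b < 28 \<Longrightarrow> ol_le LL a b \<longleftrightarrow> subl (AS ! a) (AS ! b)"
  using le_LL unfolding subl_def list_all_iff by auto

interpretation LLi: OLx LL by unfold_locales (rule olLL)

lemma bad: assumes "v 3 = (16::nat)"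
  shows "\<not> ol_le LL (ol_meet LL (ol_imp LL 2 16) (oa_eqv LL 0 v 2 9)) (ol_imp LL 9 16)"
  apply (simp add: ol_imp_def assms le_subl)
  apply (unfold subl_def inter_def oc_def AS_def ORTH_def)
  apply code_simp
  done

lemma notOA: "\<not> nOA_law LL n"
proof
  assume law: "nOA_law LL n"
  define v where "v = (\<lambda>i::nat. if i = 1 then 2 else if i = 2 then 9 else if i = 3 then (16::nat) else 0)"
  have v: "\<forall>i. v i \<in> ol_carrier LL" unfolding v_def by simp
  have vs: "v 1 = 2" "v 2 = 9" "v 3 = 16" unfolding v_def by simp_all
  from LLi.law3[OF law v] show False using bad[of v, OF vs(3)] unfolding vs by blast
qed


theorem theorem4p4:
  shows "\<forall>n::nat. n \<ge> 3 \<longrightarrow>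
     (\<forall>L :: 'a ol_struct. ortholattice L \<and> nOA_law L n \<longrightarrow> orthomodular L) \<and>
     (\<exists>L :: nat ol_struct. orthomodular L \<and> \<not> nOA_law L n)"
proof (rule allI, rule impI, rule conjI)
  fix n :: nat
  show "\<forall>L :: 'a ol_struct. ortholattice L \<and> nOA_law L n \<longrightarrow> orthomodular L"
    using OLx.partI OLx.intro by blast
  show "\<exists>L :: nat ol_struct. orthomodular L \<and> \<not> nOA_law L n"
    using omlLL notOA by blast
qed

end
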